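(* Let $d\in\mathcal{S}G$ be such that $\pi\big(1+d\,\widehat{\sigma}(d)\big)$ is a unit of $\mathbb{F}G$. Then $\mathfrak{C}_{1,d}$ is a Hermitian LCD $2$-quasi-abelian code over $\mathcal{S}$ of rate $\frac12$, i.e. $\mathfrak{C}_{1,d}$ is a free $\mathcal{S}$-module of rank $n$ inside $(\mathcal{S}G)^2\cong\mathcal{S}^{2n}$.
   Context: Let $\mathcal{S}|\mathcal{R}$ be a Galois extension of degree $2$ of finite commutative chain rings, $\mathbf{m}$ the maximal ideal of $\mathcal{S}$, with residue fields $\mathcal{S}/\mathbf{m}=\mathbb{F}=\mathbb{F}_{q^2}$ and $\mathbb{F}_q$ for $\mathcal{R}$; let $\sigma$ generate $\mathrm{Aut}_{\mathcal{R}}(\mathcal{S})$ (order 2). Let $G$ be a finite abelian group of odd order $n$ with $\gcd(n,q)=1$. Define $\widehat{\sigma}:\mathcal{S}G\to\mathcal{S}G$, $\sum_ga_gg\mapsto\sum_g\sigma(a_g)g^{-1}$. The Hermitian form on $(\mathcal{S}G)^2$ is $\langle(a_1,b_1),(a_2,b_2)\rangle_H=\sum_g a_{1,g}\sigma(a_{2,g})+\sum_g b_{1,g}\sigma(b_{2,g})$. A $2$-quasi-abelian code over $\mathcal{S}$ is an $\mathcal{S}G$-submodule of $(\mathcal{S}G)^2$; it is Hermitian LCD if it meets its Hermitian dual only in $0$. $\mathfrak{C}_{c,d}=\{(uc,ud):u\in\mathcal{S}G\}$. The map $\pi:\mathcal{S}G\to\mathbb{F}G$ reduces coefficients modulo $\mathbf{m}$.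 *)

theory Defs
  imports Main "HOL-Computational_Algebra.Primes"
begin

definition subring_on :: "'a::comm_ring_1 set \<Rightarrow> bool" where
  "subring_on A \<longleftrightarrow> 0 \<in> A \<and> 1 \<in> A \<and>
     (\<forall>x\<in>A. \<forall>y\<in>A. x + y \<in> A \<and> x - y \<in> A \<and> x * y \<in> A)"

definition ideal_on :: "'a::comm_ring_1 set \<Rightarrow> 'a set \<Rightarrow> bool" where
  "ideal_on A I \<longleftrightarrow> I \<subseteq> A \<and> 0 \<in> I \<and>
     (\<forall>x\<in>I. \<forall>y\<in>I. x + y \<in> I) \<and> (\<forall>r\<in>A. \<forall>x\<in>I. r * x \<in> I)"

definition chain_ring_on :: "'a::comm_ring_1 set \<Rightarrow> bool" where
  "chain_ring_on A \<longleftrightarrow> subring_on A \<and> finite A \<and> (0::'a) \<noteq> 1 \<and>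
     (\<forall>I J. ideal_on A I \<and> ideal_on A J \<longrightarrow> I \<subseteq> J \<or> J \<subseteq> I)"

definition max_ideal_on :: "'a::comm_ring_1 set \<Rightarrow> 'a set" where
  "max_ideal_on A = (THE M. ideal_on A M \<and> M \<noteq> A \<and>
       (\<forall>J. ideal_on A J \<and> M \<subseteq> J \<longrightarrow> J = M \<or> J = A))"

definition residue_card :: "'a::comm_ring_1 set \<Rightarrow> nat" where
  "residue_card A = card ((\<lambda>x. {y \<in> A. x - y \<in> max_ideal_on A}) ` A)"

definition ring_aut :: "('a::comm_ring_1 \<Rightarrow> 'a) \<Rightarrow> bool" where
  "ring_aut \<tau> \<longleftrightarrow> bij \<tau> \<and> \<tau> 1 = 1 \<and> (\<forall>x y. \<tau> (x + y) = \<tau> x + \<tau> y \<and> \<tau> (x * y) = \<tau> x * \<tau> y)"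

definition Aut_over :: "'a::comm_ring_1 set \<Rightarrow> ('a \<Rightarrow> 'a) set" where
  "Aut_over R = {\<tau>. ring_aut \<tau> \<and> (\<forall>r\<in>R. \<tau> r = r)}"

text \<open>S (= UNIV) is a Galois extension of degree 2 of R with Galois group generated by sigma
  (Chase--Harrison--Rosenberg definition), and sigma generates Aut_R(S), of order 2.\<close>
definition galois_ext_deg2 :: "'a::comm_ring_1 set \<Rightarrow> ('a \<Rightarrow> 'a) \<Rightarrow> bool" where
  "galois_ext_deg2 R \<sigma> \<longleftrightarrow>
     subring_on R \<and> ring_aut \<sigma> \<and> \<sigma> \<noteq> id \<and> \<sigma> \<circ> \<sigma> = id \<and>
     Aut_over R = {id, \<sigma>} \<and> R = {x. \<sigma> x = x} \<and>
     (\<exists>(k::nat) (x::nat \<Rightarrow> 'a) (y::nat \<Rightarrow> 'a).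
        (\<Sum>i<k. x i * y i) = 1 \<and> (\<Sum>i<k. x i * \<sigma> (y i)) = 0)"

definition prime_power :: "nat \<Rightarrow> bool" where
  "prime_power q \<longleftrightarrow> (\<exists>p k. prime p \<and> k > 0 \<and> q = p ^ k)"

type_synonym ('a, 'g) grpring = "'g \<Rightarrow> 'a"

definition gr_mult :: "('a::comm_ring_1, 'g::{finite,ab_group_add}) grpring \<Rightarrow> ('a,'g) grpring \<Rightarrow> ('a,'g) grpring" where
  "gr_mult u v = (\<lambda>g. \<Sum>h\<in>UNIV. u h * v (g - h))"

definition gr_one :: "('a::comm_ring_1, 'g::{finite,ab_group_add}) grpring" where
  "gr_one = (\<lambda>g. if g = 0 then 1 else 0)"

definition gr_add :: "('a::comm_ring_1, 'g::{finite,ab_group_add}) grpring \<Rightarrow> ('a,'g) grpring \<Rightarrow> ('a,'g) grpring" where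
  "gr_add u v = (\<lambda>g. u g + v g)"

definition sigma_hat :: "('a \<Rightarrow> 'a) \<Rightarrow> ('a::comm_ring_1, 'g::{finite,ab_group_add}) grpring \<Rightarrow> ('a,'g) grpring" where
  "sigma_hat \<sigma> u = (\<lambda>g. \<sigma> (u (- g)))"

text \<open>pi(x) is a unit of FG, F = S/m: there is v in SG with pi(x)pi(v) = 1,
  i.e. all coefficients of x v - 1 lie in m.\<close>
definition pi_unit :: "'a set \<Rightarrow> ('a::comm_ring_1, 'g::{finite,ab_group_add}) grpring \<Rightarrow> bool" where
  "pi_unit m x \<longleftrightarrow> (\<exists>v. \<forall>g. gr_mult x v g - gr_one g \<in> m)"

type_synonym ('a, 'g) qa2 = "('a,'g) grpring \<times> ('a,'g) grpring"

definition herm :: "('a \<Rightarrow> 'a) \<Rightarrow> ('a::comm_ring_1, 'g::{finite,ab_group_add}) qa2 \<Rightarrow> ('a,'g) qa2 \<Rightarrow> 'a" where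
  "herm \<sigma> x y = (\<Sum>g\<in>UNIV. fst x g * \<sigma> (fst y g)) + (\<Sum>g\<in>UNIV. snd x g * \<sigma> (snd y g))"

definition herm_dual :: "('a \<Rightarrow> 'a) \<Rightarrow> ('a::comm_ring_1, 'g::{finite,ab_group_add}) qa2 set \<Rightarrow> ('a,'g) qa2 set" where
  "herm_dual \<sigma> C = {x. \<forall>c\<in>C. herm \<sigma> x c = 0}"

definition qa2_code :: "('a::comm_ring_1, 'g::{finite,ab_group_add}) qa2 set \<Rightarrow> bool" where
  "qa2_code C \<longleftrightarrow> ((\<lambda>_. 0), (\<lambda>_. 0)) \<in> C \<and>
     (\<forall>x\<in>C. \<forall>y\<in>C. (gr_add (fst x) (fst y), gr_add (snd x) (snd y)) \<in> C) \<and>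
     (\<forall>u. \<forall>x\<in>C. (gr_mult u (fst x), gr_mult u (snd x)) \<in> C)"

definition herm_LCD :: "('a \<Rightarrow> 'a) \<Rightarrow> ('a::comm_ring_1, 'g::{finite,ab_group_add}) qa2 set \<Rightarrow> bool" where
  "herm_LCD \<sigma> C \<longleftrightarrow> qa2_code C \<and> C \<inter> herm_dual \<sigma> C = {((\<lambda>_. 0), (\<lambda>_. 0))}"

definition free_S_rank :: "('a::comm_ring_1, 'g::{finite,ab_group_add}) qa2 set \<Rightarrow> nat \<Rightarrow> bool" where
  "free_S_rank C k \<longleftrightarrow> (\<exists>b :: nat \<Rightarrow> ('a,'g) qa2. (\<forall>i<k. b i \<in> C) \<and>
     (\<forall>c\<in>C. \<exists>!l :: nat \<Rightarrow> 'a. (\<forall>i\<ge>k. l i = 0) \<and> c = ((\<lambda>g. \<Sum>i<k. l i * fst (b i) g), (\<lambda>g. \<Sum>i<k. l i * snd (b i) g))))"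

definition code_C :: "('a::comm_ring_1, 'g::{finite,ab_group_add}) grpring \<Rightarrow> ('a,'g) grpring \<Rightarrow> ('a,'g) qa2 set" where
  "code_C c d = {(gr_mult u c, gr_mult u d) | u. True}"

end

theory Submission
  imports Defs
begin


lemma gm_comm: fixes u :: "'g::{finite,ab_group_add} \<Rightarrow> 'a::comm_ring_1" shows "gr_mult u v = gr_mult v u"
  unfolding gr_mult_def
proof
  fix g :: 'g
  show "(\<Sum>h\<in>UNIV. u h * v (g - h)) = (\<Sum>h\<in>UNIV. v h * u (g - h))"
    by (rule sum.reindex_bij_witness[of _ "\<lambda>h. g - h" "\<lambda>h. g - h"]) (auto simp: mult.commute)
qed

lemma gm_assoc: fixes u :: "'g::{finite,ab_group_add} \<Rightarrow> 'a::comm_ring_1" shows "gr_mult (gr_mult u v) w = gr_mult u (gr_mult v w)"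
  unfolding gr_mult_def
proof
  fix g :: 'g
  have "(\<Sum>k\<in>UNIV. (\<Sum>h\<in>UNIV. u h * v (k - h)) * w (g - k))
      = (\<Sum>k\<in>UNIV. \<Sum>h\<in>UNIV. u h * v (k - h) * w (g - k))"
    by (simp add: sum_distrib_right)
  also have "\<dots> = (\<Sum>h\<in>UNIV. \<Sum>k\<in>UNIV. u h * v (k - h) * w (g - k))"
    by (rule sum.swap)
  also have "\<dots> = (\<Sum>h\<in>UNIV. \<Sum>k\<in>UNIV. u h * (v k * w (g - h - k)))"
  proof (rule sum.cong[OF refl])
    fix h
    show "(\<Sum>k\<in>UNIV. u h * v (k - h) * w (g - k)) = (\<Sum>k\<in>UNIV. u h * (v k * w (g - h - k)))"
      by (rule sum.reindex_bij_witness[of _ "\<lambda>k. k + h" "\<lambda>k. k - h"])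
         (auto simp: mult.assoc algebra_simps)
  qed
  also have "\<dots> = (\<Sum>h\<in>UNIV. u h * (\<Sum>k\<in>UNIV. v k * w (g - h - k)))"
    by (simp add: sum_distrib_left)
  finally show "(\<Sum>k\<in>UNIV. (\<Sum>h\<in>UNIV. u h * v (k - h)) * w (g - k))
      = (\<Sum>h\<in>UNIV. u h * (\<Sum>k\<in>UNIV. v k * w (g - h - k)))" .
qed

lemma gm_one: fixes u :: "'g::{finite,ab_group_add} \<Rightarrow> 'a::comm_ring_1" shows "gr_mult u gr_one = u"
  unfolding gr_mult_def gr_one_def
proof
  fix g :: 'g
  have "(\<Sum>h\<in>UNIV. u h * (if g - h = 0 then 1 else 0)) = (\<Sum>h\<in>UNIV. if h = g then u h else 0)"
    by (rule sum.cong) auto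
  then show "(\<Sum>h\<in>UNIV. u h * (if g - h = 0 then 1 else 0)) = u g" by simp
qed

lemma gm_distrib: "gr_mult u (\<lambda>g. v g + w g) = (\<lambda>g. gr_mult u v g + gr_mult u w g)"
  unfolding gr_mult_def by (simp add: distrib_left sum.distrib)

lemma gm_zero: "gr_mult u (\<lambda>_. 0) = (\<lambda>_. 0)"
  unfolding gr_mult_def by simp

typedef ('a, 'g) gra = "UNIV :: ('g \<Rightarrow> 'a) set" by auto

instantiation gra :: (comm_ring_1, "{finite,ab_group_add}") comm_ring_1
begin
definition "zero_gra = Abs_gra (\<lambda>_. 0)"
definition "one_gra = Abs_gra gr_one"
definition "plus_gra a b = Abs_gra (\<lambda>g. Rep_gra a g + Rep_gra b g)"
definition "minus_gra a b = Abs_gra (\<lambda>g. Rep_gra a g - Rep_gra b g)"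
definition "uminus_gra a = Abs_gra (\<lambda>g. - Rep_gra a g)"
definition "times_gra a b = Abs_gra (gr_mult (Rep_gra a) (Rep_gra b))"
instance
proof
  fix a b c :: "('a::comm_ring_1,'g::{finite,ab_group_add}) gra"
  show "a * b * c = a * (b * c)"
    by (simp add: times_gra_def Abs_gra_inverse gm_assoc)
  show "a * b = b * a" by (simp add: times_gra_def gm_comm)
  show "1 * a = a" by (simp add: times_gra_def one_gra_def Abs_gra_inverse gm_comm[of gr_one] gm_one Rep_gra_inverse)
  show "(a + b) * c = a * c + b * c"
    using gm_distrib[of "Rep_gra c" "Rep_gra a" "Rep_gra b"]
    by (simp add: times_gra_def plus_gra_def Abs_gra_inverse gm_comm)
  show "a + b + c = a + (b + c)" by (simp add: plus_gra_def Abs_gra_inverse add.assoc)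
  show "a + b = b + a" by (simp add: plus_gra_def add.commute)
  show "0 + a = a" by (simp add: plus_gra_def zero_gra_def Abs_gra_inverse Rep_gra_inverse)
  show "- a + a = 0" by (simp add: plus_gra_def zero_gra_def uminus_gra_def Abs_gra_inverse)
  show "a - b = a + - b" by (simp add: plus_gra_def minus_gra_def uminus_gra_def Abs_gra_inverse)
  show "(0::('a::comm_ring_1,'g::{finite,ab_group_add}) gra) \<noteq> 1" by (metis Abs_gra_inverse UNIV_I gr_one_def one_gra_def zero_gra_def zero_neq_one)
qed
end



lemma maxI_props:
  assumes ch: "chain_ring_on (UNIV :: 'a::{comm_ring_1,finite} set)"
  defines "M \<equiv> max_ideal_on (UNIV :: 'a set)"
  shows "ideal_on UNIV M \<and> M \<noteq> UNIV \<and> (\<forall>J. ideal_on UNIV J \<and> M \<subseteq> J \<longrightarrow> J = M \<or> J = UNIV)"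
proof -
  let ?P = "\<lambda>M::'a set. ideal_on UNIV M \<and> M \<noteq> UNIV \<and> (\<forall>J. ideal_on UNIV J \<and> M \<subseteq> J \<longrightarrow> J = M \<or> J = UNIV)"
  have chain: "\<And>I J :: 'a set. ideal_on UNIV I \<Longrightarrow> ideal_on UNIV J \<Longrightarrow> I \<subseteq> J \<or> J \<subseteq> I"
    using ch unfolding chain_ring_on_def by blast
  have z1: "(0::'a) \<noteq> 1" using ch unfolding chain_ring_on_def by blast
  have i0: "ideal_on UNIV {0::'a}" unfolding ideal_on_def by simp
  have p0: "{0::'a} \<noteq> UNIV" using z1 by (metis UNIV_I singletonD)
  obtain k where k: "ideal_on UNIV k \<and> k \<noteq> (UNIV::'a set)"
      "\<forall>y. ideal_on UNIV y \<and> y \<noteq> (UNIV::'a set) \<longrightarrow> card y \<le> card k"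
  proof -
    have "\<exists>x. (ideal_on UNIV x \<and> x \<noteq> (UNIV::'a set)) \<and> (\<forall>y. ideal_on UNIV y \<and> y \<noteq> (UNIV::'a set) \<longrightarrow> card y \<le> card x)"
    proof (rule Lattices_Big.ex_has_greatest_nat[of _ "{0::'a}" card "Suc (card (UNIV::'a set))"])
      show "ideal_on UNIV {0::'a} \<and> {0::'a} \<noteq> UNIV" using i0 p0 by blast
      show "\<forall>y. ideal_on UNIV y \<and> y \<noteq> (UNIV::'a set) \<longrightarrow> card y < Suc (card (UNIV::'a set))"
        by (intro allI impI le_imp_less_Suc card_mono) auto
    qed
    then show ?thesis using that by blast
  qed
  have ex: "?P k"
  proof -
    have "\<forall>J. ideal_on UNIV J \<and> k \<subseteq> J \<longrightarrow> J = k \<or> J = UNIV"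
    proof (intro allI impI)
      fix J assume J: "ideal_on UNIV J \<and> k \<subseteq> J"
      show "J = k \<or> J = UNIV"
      proof (cases "J = UNIV")
        case False
        then have "card J \<le> card k" using k J by blast
        then show ?thesis proof -
          have "card k \<le> card J" using J by (intro card_mono) auto
          then have "card k = card J" using \<open>card J \<le> card k\<close> by simp
          then have "k = J" using J by (intro card_subset_eq) auto
          then show ?thesis by simp
        qed
      qed simp
    qed
    then show ?thesis using k by blast
  qed
  have uniq: "\<And>M'. ?P M' \<Longrightarrow> M' = k"
  proof -
    fix M' assume "?P M'"
    then have A: "ideal_on UNIV M'" "M' \<noteq> UNIV" "\<And>J. ideal_on UNIV J \<Longrightarrow> M' \<subseteq> J \<Longrightarrow> J = M' \<or> J = UNIV" by blast+
    have B: "ideal_on UNIV k" "k \<noteq> UNIV" "\<And>J. ideal_on UNIV J \<Longrightarrow> k \<subseteq> J \<Longrightarrow> J = k \<or> J = UNIV" using ex by blast+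
    show "M' = k"
    proof (cases "M' \<subseteq> k")
      case True then show ?thesis using A(3)[OF B(1)] B(2) by blast
    next
      case False then have "k \<subseteq> M'" using chain[OF A(1) B(1)] by blast
      then show ?thesis using B(3)[OF A(1)] A(2) by blast
    qed
  qed
  have "?P (THE M. ?P M)" by (rule theI[of ?P k, OF ex uniq])
  then show ?thesis unfolding M_def max_ideal_on_def .
qed

lemma nonmax_unit:
  assumes ch: "chain_ring_on (UNIV :: 'a::{comm_ring_1,finite} set)"
    and x: "x \<notin> max_ideal_on (UNIV :: 'a set)"
  shows "\<exists>y. x * y = 1"
proof -
  define M where "M = max_ideal_on (UNIV :: 'a set)"
  have P: "ideal_on UNIV M \<and> M \<noteq> UNIV \<and> (\<forall>J. ideal_on UNIV J \<and> M \<subseteq> J \<longrightarrow> J = M \<or> J = UNIV)"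
    using maxI_props[OF ch] M_def by simp
  have chain: "\<And>I J :: 'a set. ideal_on UNIV I \<Longrightarrow> ideal_on UNIV J \<Longrightarrow> I \<subseteq> J \<or> J \<subseteq> I"
    using ch unfolding chain_ring_on_def by blast
  define J where "J = range (\<lambda>r. x * r)"
  have iJ: "ideal_on UNIV J" unfolding ideal_on_def J_def
  proof (intro conjI ballI allI)
    show "0 \<in> range (\<lambda>r. x * r)" by (metis mult_zero_right rangeI)
    fix u v assume "u \<in> range (\<lambda>r. x * r)" "v \<in> range (\<lambda>r. x * r)"
    then obtain r s where "u = x * r" "v = x * s" by blast
    then have "u + v = x * (r + s)" by (simp add: distrib_left)
    then show "u + v \<in> range (\<lambda>r. x * r)" by blast
  next
    fix t u assume "u \<in> range (\<lambda>r. x * r)"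
    then obtain r where "u = x * r" by blast
    then have "t * u = x * (t * r)" by (simp add: mult.left_commute)
    then show "t * u \<in> range (\<lambda>r. x * r)" by blast
  qed simp
  have "x \<in> J" unfolding J_def by (metis mult_1_right rangeI)
  then have "\<not> J \<subseteq> M" using x M_def by auto
  then have "M \<subseteq> J" using chain[OF iJ] P by blast
  then have "J = M \<or> J = UNIV" using P iJ by blast
  then have "J = UNIV" using \<open>\<not> J \<subseteq> M\<close> by auto
  then have "1 \<in> J" by simp
  then show ?thesis unfolding J_def by (metis imageE)
qed

lemma max_nilp:
  assumes ch: "chain_ring_on (UNIV :: 'a::{comm_ring_1,finite} set)"
    and a: "a \<in> max_ideal_on (UNIV :: 'a set)"
  shows "\<exists>N. a ^ N = 0"
proof -
  define M where "M = max_ideal_on (UNIV :: 'a set)"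
  have P: "ideal_on UNIV M \<and> M \<noteq> UNIV"
    using maxI_props[OF ch] M_def by simp
  have one: "1 \<notin> M"
  proof
    assume "1 \<in> M"
    then have "\<forall>r. r * 1 \<in> M" using P unfolding ideal_on_def by blast
    then show False using P by auto
  qed
  have aM: "a \<in> M" using a M_def by simp
  have powM: "\<And>p. p > 0 \<Longrightarrow> a ^ p \<in> M"
  proof -
    fix p :: nat assume "p > 0"
    then obtain p' where "p = Suc p'" by (cases p) auto
    moreover have "a ^ p' * a \<in> M" using P aM unfolding ideal_on_def by blast
    ultimately show "a ^ p \<in> M" by (metis mult.commute power_Suc)
  qed
  have "\<not> inj_on (\<lambda>k. a ^ k) {0..card (UNIV::'a set)}"
  proof
    assume "inj_on (\<lambda>k. a ^ k) {0..card (UNIV::'a set)}"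
    then have "card ((\<lambda>k. a ^ k) ` {0..card (UNIV::'a set)}) = Suc (card (UNIV::'a set))"
      by (simp add: card_image)
    moreover have "card ((\<lambda>k. a ^ k) ` {0..card (UNIV::'a set)}) \<le> card (UNIV::'a set)"
      by (rule card_mono) auto
    ultimately show False by simp
  qed
  then obtain i j where ij: "i \<noteq> j" "a ^ i = a ^ j" unfolding inj_on_def by blast
  have "\<exists>i p. p > 0 \<and> a ^ i = a ^ (i + p)"
  proof (cases "i < j")
    case True then show ?thesis using ij by (intro exI[of _ i] exI[of _ "j - i"]) auto
  next
    case False then have "j < i" using ij(1) by simp
    then show ?thesis using ij by (intro exI[of _ j] exI[of _ "i - j"]) auto
  qed
  then obtain i p where ip: "p > 0" "a ^ i = a ^ (i + p)" by blast
  have "1 - a ^ p \<notin> M"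
  proof
    assume "1 - a ^ p \<in> M"
    then have "(1 - a ^ p) + a ^ p \<in> M" using powM[OF ip(1)] P unfolding ideal_on_def by blast
    then show False using one by simp
  qed
  then obtain y where y: "(1 - a ^ p) * y = 1" using nonmax_unit[OF ch] M_def by blast
  have "a ^ i * (1 - a ^ p) = 0" using ip(2) by (simp add: algebra_simps power_add)
  then have "a ^ i * (1 - a ^ p) * y = 0" by simp
  then have "a ^ i = 0" using y by (simp add: mult.assoc)
  then show ?thesis by blast
qed



lemma Rep_plus: "Rep_gra (a + b) = (\<lambda>g. Rep_gra a g + Rep_gra b g)"
  by (simp add: plus_gra_def Abs_gra_inverse)
lemma Rep_minus: "Rep_gra (a - b) = (\<lambda>g. Rep_gra a g - Rep_gra b g)"
  by (simp add: minus_gra_def Abs_gra_inverse)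
lemma Rep_times: "Rep_gra (a * b) = gr_mult (Rep_gra a) (Rep_gra b)"
  by (simp add: times_gra_def Abs_gra_inverse)
lemma Rep_zero: "Rep_gra (0::('a::comm_ring_1,'g::{finite,ab_group_add}) gra) = (\<lambda>_. 0)"
  by (simp add: zero_gra_def Abs_gra_inverse)
lemma Rep_one: "Rep_gra (1::('a::comm_ring_1,'g::{finite,ab_group_add}) gra) = gr_one"
  by (simp add: one_gra_def Abs_gra_inverse)
lemma Rep_Abs: "Rep_gra (Abs_gra f) = f" by (simp add: Abs_gra_inverse)

lemma Rep_sum: "finite A \<Longrightarrow> Rep_gra (sum f A) = (\<lambda>h. \<Sum>x\<in>A. Rep_gra (f x) h)"
  by (induction A rule: finite_induct) (auto simp: Rep_zero Rep_plus)

lemma nil_add: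
  fixes a b :: "'a::comm_ring_1"
  assumes "a ^ n = 0" "b ^ m = 0"
  shows "(a + b) ^ (n + m) = 0"
proof -
  have "(a + b) ^ (n + m) = (\<Sum>k\<le>n + m. of_nat ((n + m) choose k) * a ^ k * b ^ (n + m - k))"
    by (rule binomial_ring)
  also have "\<dots> = 0"
  proof (rule sum.neutral, rule ballI)
    fix k assume "k \<in> {..n + m}"
    show "of_nat ((n + m) choose k) * a ^ k * b ^ (n + m - k) = 0"
    proof (cases "n \<le> k")
      case True
      then have "a ^ k = a ^ n * a ^ (k - n)" by (simp flip: power_add)
      then show ?thesis using assms by simp
    next
      case False
      then have "n + m - k = m + (n + m - k - m)" by simp
      then have "b ^ (n + m - k) = b ^ m * b ^ (n + m - k - m)" by (metis power_add)
      then show ?thesis using assms by simp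
    qed
  qed
  finally show ?thesis .
qed

lemma nil_sum:
  fixes f :: "'b \<Rightarrow> 'a::comm_ring_1"
  assumes "finite A" "\<forall>x\<in>A. \<exists>n. f x ^ n = 0"
  shows "\<exists>n. (sum f A) ^ n = 0"
  using assms
proof (induction A rule: finite_induct)
  case empty then show ?case by (intro exI[of _ 1]) simp
next
  case (insert x F)
  then obtain n m where "f x ^ n = 0" "(sum f F) ^ m = 0" by auto
  then show ?case using insert nil_add by (metis sum.insert)
qed

definition cst :: "'a \<Rightarrow> ('a::comm_ring_1,'g::{finite,ab_group_add}) gra" where
  "cst c = Abs_gra (\<lambda>g. if g = 0 then c else 0)"
definition dl :: "'g \<Rightarrow> ('a::comm_ring_1,'g::{finite,ab_group_add}) gra" where
  "dl k = Abs_gra (\<lambda>h. if h = k then 1 else 0)"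

lemma cst_mult: "cst a * cst b = (cst (a * b) :: ('a::comm_ring_1,'g::{finite,ab_group_add}) gra)"
proof -
  have "gr_mult (\<lambda>g::'g. if g = 0 then a else 0) (\<lambda>g. if g = 0 then b else 0) = (\<lambda>g. if g = 0 then a * b else 0)"
  proof
    fix g :: 'g
    have "(\<Sum>h\<in>UNIV. (if h = 0 then a else 0) * (if g - h = 0 then b else 0)) =
          (\<Sum>h::'g\<in>UNIV. if h = 0 then (if g = 0 then a * b else 0) else 0)"
      by (intro sum.cong refl) auto
    then show "gr_mult (\<lambda>g::'g. if g = 0 then a else 0) (\<lambda>g. if g = 0 then b else 0) g = (if g = 0 then a * b else 0)"
      unfolding gr_mult_def by simp
  qed
  then show ?thesis unfolding cst_def times_gra_def by (simp add: Abs_gra_inverse)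
qed

lemma cst_one: "cst 1 = (1 :: ('a::comm_ring_1,'g::{finite,ab_group_add}) gra)"
  unfolding cst_def one_gra_def gr_one_def ..

lemma cst_power: "cst a ^ n = (cst (a ^ n) :: ('a::comm_ring_1,'g::{finite,ab_group_add}) gra)"
  by (induction n) (simp_all add: cst_one cst_mult)

lemma cst_zero: "cst 0 = (0 :: ('a::comm_ring_1,'g::{finite,ab_group_add}) gra)"
  unfolding cst_def zero_gra_def by simp

lemma cst_dl: "Rep_gra (cst c * dl k :: ('a::comm_ring_1,'g::{finite,ab_group_add}) gra) h = (if h = k then c else 0)"
proof -
  have "(\<Sum>x\<in>UNIV. (if x = 0 then c else 0) * (if h - x = k then 1 else 0)) =
        (\<Sum>x::'g\<in>UNIV. if x = 0 then (if h = k then c else 0) else (0::'a))"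
    by (intro sum.cong refl) auto
  then show ?thesis unfolding cst_def dl_def by (simp add: Rep_times Rep_Abs gr_mult_def)
qed

lemma decomp: "(E :: ('a::comm_ring_1,'g::{finite,ab_group_add}) gra) = (\<Sum>g\<in>UNIV. cst (Rep_gra E g) * dl g)"
proof -
  have "Rep_gra (\<Sum>g\<in>UNIV. cst (Rep_gra E g) * dl g) = Rep_gra E"
  proof
    fix h
    have "Rep_gra (\<Sum>g\<in>UNIV. cst (Rep_gra E g) * dl g) h = (\<Sum>g\<in>UNIV. if h = g then Rep_gra E g else 0)"
      by (simp add: Rep_sum cst_dl)
    also have "\<dots> = Rep_gra E h" by simp
    finally show "Rep_gra (\<Sum>g\<in>UNIV. cst (Rep_gra E g) * dl g) h = Rep_gra E h" .
  qed
  then show ?thesis by (simp add: Rep_gra_inject)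
qed

lemma nil_gra:
  assumes "\<forall>g. \<exists>n. (Rep_gra (E :: ('a::comm_ring_1,'g::{finite,ab_group_add}) gra) g) ^ n = 0"
  shows "\<exists>n. E ^ n = 0"
proof -
  have "\<exists>n. (\<Sum>g\<in>UNIV. cst (Rep_gra E g) * dl g) ^ n = (0 :: ('a,'g) gra)"
  proof (rule nil_sum)
    show "\<forall>x\<in>UNIV. \<exists>n. (cst (Rep_gra E x) * dl x) ^ n = (0 :: ('a,'g) gra)"
    proof
      fix x
      obtain n where "(Rep_gra E x) ^ n = 0" using assms by blast
      then have "(cst (Rep_gra E x) * dl x) ^ n = (0 :: ('a,'g) gra)"
        by (simp add: power_mult_distrib cst_power cst_zero)
      then show "\<exists>n. (cst (Rep_gra E x) * dl x) ^ n = (0 :: ('a,'g) gra)" by blast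
    qed
  qed simp
  then show ?thesis using decomp[of E] by simp
qed



lemma aut_zero: "ring_aut \<sigma> \<Longrightarrow> \<sigma> 0 = 0"
  unfolding ring_aut_def by (metis add_cancel_right_right add_0)

lemma aut_sum: "ring_aut \<sigma> \<Longrightarrow> \<sigma> (sum f A) = (\<Sum>x\<in>A. \<sigma> (f x))"
  using sum_comp_morphism[of \<sigma> f A] aut_zero unfolding ring_aut_def comp_def by metis

lemma sh_mult:
  fixes a b :: "'g::{finite,ab_group_add} \<Rightarrow> 'a::comm_ring_1"
  assumes "ring_aut \<sigma>"
  shows "sigma_hat \<sigma> (gr_mult a b) = gr_mult (sigma_hat \<sigma> a) (sigma_hat \<sigma> b)"
proof
  fix g :: 'g
  have m: "\<And>x y. \<sigma> (x * y) = \<sigma> x * \<sigma> y" using assms unfolding ring_aut_def by blast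
  have eqg: "\<And>x. - (g - - x) = - g - x"
    by (metis add_uminus_conv_diff minus_add_distrib diff_minus_eq_add)
  have "sigma_hat \<sigma> (gr_mult a b) g = (\<Sum>h\<in>UNIV. \<sigma> (a h) * \<sigma> (b (- g - h)))"
    unfolding sigma_hat_def gr_mult_def by (simp add: aut_sum[OF assms] m)
  also have "\<dots> = (\<Sum>h\<in>UNIV. \<sigma> (a (- h)) * \<sigma> (b (- (g - h))))"
    by (rule sum.reindex_bij_witness[of _ uminus uminus]) (simp_all add: eqg)
  finally show "sigma_hat \<sigma> (gr_mult a b) g = gr_mult (sigma_hat \<sigma> a) (sigma_hat \<sigma> b) g"
    unfolding sigma_hat_def gr_mult_def by simp
qed

lemma sh_invol: "\<sigma> \<circ> \<sigma> = id \<Longrightarrow> sigma_hat \<sigma> (sigma_hat \<sigma> a) = a"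
  unfolding sigma_hat_def by (simp add: pointfree_idE)

lemma herm_eq: "herm \<sigma> (a1, b1) (a2, b2) = gr_mult a1 (sigma_hat \<sigma> a2) 0 + gr_mult b1 (sigma_hat \<sigma> b2) 0"
  unfolding herm_def gr_mult_def sigma_hat_def by simp

lemma eval_dl: "Rep_gra (Y * dl k) 0 = Rep_gra (Y :: ('a::comm_ring_1,'g::{finite,ab_group_add}) gra) (- k)"
proof -
  have "(\<Sum>h\<in>UNIV. Rep_gra Y h * (if 0 - h = k then 1 else 0)) = (\<Sum>h\<in>UNIV. if h = - k then Rep_gra Y h else 0)"
    by (intro sum.cong refl) (auto simp: algebra_simps)
  then show ?thesis unfolding dl_def by (simp add: Rep_times Rep_Abs gr_mult_def)
qed

lemma gm_zero_left: "gr_mult (\<lambda>_. 0) v = (\<lambda>_. 0)"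
  unfolding gr_mult_def by simp

lemma lcd_part:
  fixes \<sigma> :: "'a::{comm_ring_1,finite} \<Rightarrow> 'a"
    and d :: "'g::{finite,ab_group_add} \<Rightarrow> 'a"
  assumes ch: "chain_ring_on (UNIV :: 'a set)"
    and aut: "ring_aut \<sigma>" and inv: "\<sigma> \<circ> \<sigma> = id"
    and pu: "pi_unit (max_ideal_on (UNIV :: 'a set)) (gr_add gr_one (gr_mult d (sigma_hat \<sigma> d)))"
    and hu: "\<forall>w. herm \<sigma> (u, gr_mult u d) (gr_mult w gr_one, gr_mult w d) = 0"
  shows "u = (\<lambda>_. 0)"
proof -
  define U :: "('a,'g) gra" where "U = Abs_gra u"
  define D :: "('a,'g) gra" where "D = Abs_gra d"
  define SD :: "('a,'g) gra" where "SD = Abs_gra (sigma_hat \<sigma> d)"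
  define X where "X = 1 + D * SD"
  have "Rep_gra (U * X) = (\<lambda>_. 0)"
  proof
    fix g :: 'g
    define L :: "('a,'g) gra" where "L = dl (- g)"
    define w where "w = sigma_hat \<sigma> (Rep_gra L)"
    have sw: "sigma_hat \<sigma> w = Rep_gra L" unfolding w_def by (rule sh_invol[OF inv])
    have "herm \<sigma> (u, gr_mult u d) (gr_mult w gr_one, gr_mult w d) =
       gr_mult u (Rep_gra L) 0 + gr_mult (gr_mult u d) (gr_mult (Rep_gra L) (sigma_hat \<sigma> d)) 0"
      by (simp add: herm_eq gm_one sh_mult[OF aut] sw)
    also have "\<dots> = Rep_gra (U * L + U * D * (L * SD)) 0"
      by (simp add: Rep_plus Rep_times Rep_Abs U_def D_def SD_def)
    also have "U * L + U * D * (L * SD) = U * X * L" unfolding X_def by (simp add: algebra_simps)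
    also have "Rep_gra (U * X * L) 0 = Rep_gra (U * X) g" unfolding L_def by (simp add: eval_dl)
    finally show "Rep_gra (U * X) g = 0" using hu by simp
  qed
  then have "Rep_gra (U * X) = Rep_gra 0" by (simp add: Rep_zero)
  then have UX: "U * X = 0" by (simp only: Rep_gra_inject)
  obtain v where v: "\<forall>g. gr_mult (gr_add gr_one (gr_mult d (sigma_hat \<sigma> d))) v g - gr_one g \<in> max_ideal_on (UNIV :: 'a set)"
    using pu unfolding pi_unit_def by blast
  define V :: "('a,'g) gra" where "V = Abs_gra v"
  define E where "E = X * V - 1"
  have RX: "Rep_gra X = gr_add gr_one (gr_mult d (sigma_hat \<sigma> d))"
    unfolding X_def gr_add_def by (simp add: Rep_plus Rep_times Rep_one Rep_Abs D_def SD_def)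
  have "\<forall>g. \<exists>n. (Rep_gra E g) ^ n = 0"
  proof
    fix g
    have "Rep_gra E g \<in> max_ideal_on (UNIV :: 'a set)"
      using v unfolding E_def by (simp add: Rep_minus Rep_times Rep_one RX V_def Rep_Abs)
    then show "\<exists>n. (Rep_gra E g) ^ n = 0" using max_nilp[OF ch] by blast
  qed
  then obtain N where EN: "E ^ N = 0" using nil_gra by blast
  have "U * (1 + E) = U * X * V" unfolding E_def by (simp add: algebra_simps)
  also have "\<dots> = 0" using UX by simp
  finally have "U + U * E = 0" by (simp add: distrib_left)
  then have U1: "U = U * (- E)" by (metis add.commute add_eq_0_iff2 mult_minus_right minus_equation_iff)
  have "\<And>k. U = U * (- E) ^ k"
  proof -
    fix k show "U = U * (- E) ^ k"
    proof (induction k)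
      case (Suc k)
      have "U * (- E) ^ Suc k = (U * (- E) ^ k) * (- E)" by (simp add: algebra_simps)
      also have "\<dots> = U * (- E)" by (simp only: Suc.IH[symmetric])
      finally show ?case by (rule trans[OF U1 sym])
    qed simp
  qed
  then have UN: "U = U * (- E) ^ N" .
  have "(- E) ^ N = (- 1) ^ N * E ^ N" by (rule power_minus)
  also have "\<dots> = 0" by (simp only: EN mult_zero_right)
  finally have "U * (- E) ^ N = 0" by (simp only: mult_zero_right)
  then have "U = 0" by (rule trans[OF UN])
  have "u = Rep_gra U" unfolding U_def by (simp only: Rep_Abs)
  also have "\<dots> = Rep_gra 0" by (simp only: \<open>U = 0\<close>)
  also have "\<dots> = (\<lambda>_. 0)" by (rule Rep_zero)
  finally show ?thesis .
qed



lemma gm_distrib_right: "gr_mult (\<lambda>g. v g + w g) u = (\<lambda>g. gr_mult v u g + gr_mult w u g)"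
  unfolding gr_mult_def by (simp add: distrib_right sum.distrib)

lemma memC: "code_C gr_one d = {(u, gr_mult u d) | u. True}"
  by (simp add: code_C_def gm_one)

definition delta :: "'g \<Rightarrow> 'g \<Rightarrow> 'a::comm_ring_1" where
  "delta k = (\<lambda>g. if g = k then 1 else 0)"

lemma gm_delta: "gr_mult (delta k) v g = v (g - k)"
proof -
  have "(\<Sum>x\<in>UNIV. (if x = k then 1 else 0) * v (g - x)) = (\<Sum>x\<in>UNIV. if x = k then v (g - k) else 0)"
    by (intro sum.cong refl) auto
  then show ?thesis unfolding gr_mult_def delta_def by simp
qed

lemma herm_zero: "herm \<sigma> ((\<lambda>_. 0), (\<lambda>_. 0)) c = 0"
  unfolding herm_def by simp

theorem mainTheorem15:
  fixes R :: "'a::{comm_ring_1,finite} set"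
    and \<sigma> :: "'a \<Rightarrow> 'a"
    and q :: nat
    and d :: "'g::{finite,ab_group_add} \<Rightarrow> 'a"
  assumes "chain_ring_on (UNIV :: 'a set)"
    and "chain_ring_on R"
    and "galois_ext_deg2 R \<sigma>"
    and "prime_power q"
    and "residue_card (UNIV :: 'a set) = q ^ 2"
    and "residue_card R = q"
    and "odd (card (UNIV :: 'g set))"
    and "coprime (card (UNIV :: 'g set)) q"
    and "pi_unit (max_ideal_on (UNIV :: 'a set)) (gr_add gr_one (gr_mult d (sigma_hat \<sigma> d)))"
  shows "herm_LCD \<sigma> (code_C gr_one d) \<and> free_S_rank (code_C gr_one d) (card (UNIV :: 'g set))"
proof
  have aut: "ring_aut \<sigma>" and inv: "\<sigma> \<circ> \<sigma> = id" using assms(3) unfolding galois_ext_deg2_def by blast+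
  let ?C = "code_C gr_one d"
  have Cw: "\<And>w. (gr_mult w gr_one, gr_mult w d) \<in> ?C" unfolding code_C_def by blast
  have C0: "((\<lambda>_. 0), (\<lambda>_. 0)) \<in> ?C"
    unfolding memC using gm_zero_left[of d] by force
  have code: "qa2_code ?C"
    unfolding qa2_code_def
  proof (intro conjI ballI allI)
    show "((\<lambda>_. 0), (\<lambda>_. 0)) \<in> ?C" by (rule C0)
  next
    fix x y assume "x \<in> ?C" "y \<in> ?C"
    then obtain u1 u2 where "x = (u1, gr_mult u1 d)" "y = (u2, gr_mult u2 d)" unfolding memC by blast
    moreover have "gr_add (gr_mult u1 d) (gr_mult u2 d) = gr_mult (gr_add u1 u2) d"
      unfolding gr_add_def by (simp add: gm_distrib_right)
    ultimately show "(gr_add (fst x) (fst y), gr_add (snd x) (snd y)) \<in> ?C"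
      unfolding memC by auto
  next
    fix w x assume "x \<in> ?C"
    then obtain u where "x = (u, gr_mult u d)" unfolding memC by blast
    then show "(gr_mult w (fst x), gr_mult w (snd x)) \<in> ?C"
      unfolding memC by (auto simp: gm_assoc)
  qed
  show "herm_LCD \<sigma> ?C"
    unfolding herm_LCD_def
  proof (intro conjI code)
    show "?C \<inter> herm_dual \<sigma> ?C = {((\<lambda>_. 0), (\<lambda>_. 0))}"
    proof
      show "{((\<lambda>_. 0), (\<lambda>_. 0))} \<subseteq> ?C \<inter> herm_dual \<sigma> ?C"
        using C0 herm_zero unfolding herm_dual_def by auto
    next
      show "?C \<inter> herm_dual \<sigma> ?C \<subseteq> {((\<lambda>_. 0), (\<lambda>_. 0))}"
      proof
        fix x assume x: "x \<in> ?C \<inter> herm_dual \<sigma> ?C"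
        then obtain u where u: "x = (u, gr_mult u d)" unfolding memC by blast
        have "\<forall>w. herm \<sigma> (u, gr_mult u d) (gr_mult w gr_one, gr_mult w d) = 0"
          using x Cw unfolding u herm_dual_def by blast
        then have "u = (\<lambda>_. 0)" using lcd_part[OF assms(1) aut inv assms(9)] by blast
        then show "x \<in> {((\<lambda>_. 0), (\<lambda>_. 0))}" using u gm_zero_left[of d] by simp
      qed
    qed
  qed
  show "free_S_rank ?C (card (UNIV :: 'g set))"
  proof -
    define n where "n = card (UNIV :: 'g set)"
    obtain h where hb: "bij_betw h {..<n} (UNIV :: 'g set)"
      using ex_bij_betw_nat_finite[of "UNIV :: 'g set"] unfolding n_def by (auto simp: atLeast0LessThan)
    have hinj: "\<And>i j. i < n \<Longrightarrow> j < n \<Longrightarrow> h i = h j \<Longrightarrow> i = j"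
      using hb unfolding bij_betw_def inj_on_def by blast
    have reidx: "\<And>f :: 'g \<Rightarrow> 'a. (\<Sum>i<n. f (h i)) = (\<Sum>k\<in>UNIV. f k)"
      using sum.reindex_bij_betw[OF hb] by blast
    define b where "b i = (delta (h i) :: 'g \<Rightarrow> 'a, gr_mult (delta (h i)) d)" for i
    have evalfst: "\<And>l j. j < n \<Longrightarrow> (\<Sum>i<n. l i * fst (b i) (h j)) = l j"
    proof -
      fix l :: "nat \<Rightarrow> 'a" and j assume j: "j < n"
      have "(\<Sum>i<n. l i * fst (b i) (h j)) = (\<Sum>i<n. if i = j then l i else 0)"
        by (intro sum.cong refl) (use hinj j in \<open>auto simp: b_def delta_def\<close>)
      also have "\<dots> = l j" using j by simp
      finally show "(\<Sum>i<n. l i * fst (b i) (h j)) = l j" .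
    qed
    have "(\<forall>i<n. b i \<in> ?C) \<and>
     (\<forall>c\<in>?C. \<exists>!l :: nat \<Rightarrow> 'a. (\<forall>i\<ge>n. l i = 0) \<and> c = ((\<lambda>g. \<Sum>i<n. l i * fst (b i) g), (\<lambda>g. \<Sum>i<n. l i * snd (b i) g)))"
    proof (intro conjI allI impI ballI)
      fix i assume "i < n"
      show "b i \<in> ?C" unfolding b_def memC by blast
    next
      fix c assume "c \<in> ?C"
      then obtain u where u: "c = (u, gr_mult u d)" unfolding memC by blast
      define l where "l i = (if i < n then u (h i) else 0)" for i
      let ?P = "\<lambda>l :: nat \<Rightarrow> 'a. (\<forall>i\<ge>n. l i = 0) \<and> c = ((\<lambda>g. \<Sum>i<n. l i * fst (b i) g), (\<lambda>g. \<Sum>i<n. l i * snd (b i) g))"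
      show "\<exists>!l. ?P l"
      proof (rule ex1I[of _ l])
        have f1: "(\<lambda>g. \<Sum>i<n. l i * fst (b i) g) = u"
        proof
          fix g
          have "(\<Sum>i<n. l i * fst (b i) g) = (\<Sum>i<n. u (h i) * delta (h i) g)"
            by (intro sum.cong refl) (simp add: l_def b_def)
          also have "\<dots> = (\<Sum>k\<in>UNIV. u k * delta k g)" by (rule reidx)
          also have "\<dots> = (\<Sum>k\<in>UNIV. if k = g then u g else 0)"
            by (intro sum.cong refl) (auto simp: delta_def)
          also have "\<dots> = u g" by simp
          finally show "(\<Sum>i<n. l i * fst (b i) g) = u g" .
        qed
        have f2: "(\<lambda>g. \<Sum>i<n. l i * snd (b i) g) = gr_mult u d"
        proof
          fix g
          have "(\<Sum>i<n. l i * snd (b i) g) = (\<Sum>i<n. u (h i) * d (g - h i))"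
            by (intro sum.cong refl) (simp add: l_def b_def gm_delta)
          also have "\<dots> = (\<Sum>k\<in>UNIV. u k * d (g - k))" by (rule reidx)
          finally show "(\<Sum>i<n. l i * snd (b i) g) = gr_mult u d g" unfolding gr_mult_def .
        qed
        show "?P l" using f1 f2 u by (simp add: l_def)
      next
        fix l' assume P: "?P l'"
        show "l' = l"
        proof
          fix i
          show "l' i = l i"
          proof (cases "i < n")
            case True
            have "u = (\<lambda>g. \<Sum>i<n. l' i * fst (b i) g)" using P u by simp
            then have "u (h i) = l' i" using evalfst[OF True, of l'] by simp
            then show ?thesis using True by (simp add: l_def)
          next
            case False then show ?thesis using P by (simp add: l_def)
          qed
        qed
      qed
    qed
    then show ?thesis unfolding free_S_rank_def n_def by blast
  qed
qed


end
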